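(* In each of the four calculi ${\tt Name}$, ${\tt Value}^{\tt LR}$, ${\tt Value}^{\tt RL}$ and ${\tt Need}$ described below, reduction is deterministic: if $E_1,E_2$ are evaluation contexts of the calculus and $r_1,r_2$ are redexes of the calculus (terms matching the left-hand side of one of the two root rules $\mapsto_{\mathtt m}$, $\mapsto_{\mathtt e}$ defining it), then $E_1\langle r_1\rangle=E_2\langle r_2\rangle$ implies $E_1=E_2$ and $r_1=r_2$. Hence every term has at most one way to reduce.
   Context: Terms: $t,u,w ::= x \mid v \mid t\,u \mid t[x\leftarrow u]$, values $v ::= \lambda x.t$. Both $\lambda x.t$ and $t[x\leftarrow u]$ (an explicit substitution) bind $x$ in $t$; terms are taken up to $\alpha$-equivalence and rewriting is capture-avoiding. A context is a term with exactly one occurrence of a hole $\langle\cdot\rangle$; $C\langle t\rangle$ denotes plugging (which may capture variables). Substitution contexts: $L ::= \langle\cdot\rangle \mid L[x\leftarrow t]$. Root rules (for a family of contexts $C$, always assuming $C$ does not capture $x$, i.e. $x\in\mathrm{fv}(C\langle x\rangle)$): dB: $L\langle\lambda x.t\rangle u \mapsto L\langle t[x\leftarrow u]\rangle$; dBv: $L\langle\lambda x.t\rangle L'\langle v\rangle \mapsto L\langle t[x\leftarrow L'\langle v\rangle]\rangle$; ls (w.r.t. $C$): $C\langle x\rangle[x\leftarrow u]\mapsto C\langle u\rangle[x\leftarrow u]$; lsv (w.r.t. $C$): $C\langle x\rangle[x\leftarrow L\langle v\rangle]\mapsto L\langle C\langle v\rangle[x\leftarrow v]\rangle$. The four calculi,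 each given by evaluation contexts, a multiplicative root rule $\mapsto_{\mathtt m}$ and an exponential root rule $\mapsto_{\mathtt e}$: ${\tt Name}$: $H ::= \langle\cdot\rangle \mid H\,t \mid H[x\leftarrow t]$; $\mapsto_{\mathtt m}$ = dB; $\mapsto_{\mathtt e}$ = ls w.r.t. contexts $H$. ${\tt Value}^{\tt LR}$: $V ::= \langle\cdot\rangle \mid V\,t \mid L\langle v\rangle V \mid V[x\leftarrow t]$; $\mapsto_{\mathtt m}$ = dBv; $\mapsto_{\mathtt e}$ = lsv w.r.t. contexts $V$. ${\tt Value}^{\tt RL}$: $S ::= \langle\cdot\rangle \mid S\,L\langle v\rangle \mid t\,S \mid S[x\leftarrow t]$; $\mapsto_{\mathtt m}$ = dBv; $\mapsto_{\mathtt e}$ = lsv w.r.t. contexts $S$. ${\tt Need}$: $N ::= \langle\cdot\rangle \mid N\,t \mid N[x\leftarrow t] \mid N'\langle x\rangle[x\leftarrow N]$; $\mapsto_{\mathtt m}$ = dB; $\mapsto_{\mathtt e}$ = lsv w.r.t. contexts $N$. The reduction relations are $\multimap_{\mathtt m} := E\langle\mapsto_{\mathtt m}\rangle$ and $\multimap_{\mathtt e}:=E\langle\mapsto_{\mathtt e}\rangle$ for $E$ ranging over evaluation contexts of the calculus, and $\multimap:=\multimap_{\mathtt m}\cup\multimap_{\mathtt e}$. *)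

theory Defs
  imports Main
begin

text \<open>Terms up to alpha-equivalence, represented with de Bruijn indices.
  Both Lam t and ES t u (the explicit substitution t[x<-u]) bind index 0 in t;
  u in ES t u is not under the binder.\<close>
datatype trm = Var nat | Lam trm | App trm trm | ES trm trm

text \<open>General one-hole contexts (hole may be under binders; plugging captures).\<close>
datatype ctx = Hole | CAppL ctx trm | CAppR trm ctx | CLam ctx
  | CESL ctx trm | CESR trm ctx

fun plug :: "ctx \<Rightarrow> trm \<Rightarrow> trm" where
  "plug Hole s = s"
| "plug (CAppL C t) s = App (plug C s) t"
| "plug (CAppR t C) s = App t (plug C s)"
| "plug (CLam C) s = Lam (plug C s)"
| "plug (CESL C t) s = ES (plug C s) t"
| "plug (CESR t C) s = ES t (plug C s)"

fun bdepth :: "ctx \<Rightarrow> nat" where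
  "bdepth Hole = 0"
| "bdepth (CAppL C t) = bdepth C"
| "bdepth (CAppR t C) = bdepth C"
| "bdepth (CLam C) = Suc (bdepth C)"
| "bdepth (CESL C t) = Suc (bdepth C)"
| "bdepth (CESR t C) = bdepth C"

definition is_value :: "trm \<Rightarrow> bool" where
  "is_value t \<longleftrightarrow> (\<exists>b. t = Lam b)"

inductive is_L :: "ctx \<Rightarrow> bool" where
  "is_L Hole"
| "is_L L \<Longrightarrow> is_L (CESL L t)"

inductive is_H :: "ctx \<Rightarrow> bool" where
  "is_H Hole"
| "is_H H \<Longrightarrow> is_H (CAppL H t)"
| "is_H H \<Longrightarrow> is_H (CESL H t)"

inductive is_V :: "ctx \<Rightarrow> bool" where
  "is_V Hole"
| "is_V V \<Longrightarrow> is_V (CAppL V t)"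
| "is_L L \<Longrightarrow> is_value v \<Longrightarrow> is_V V \<Longrightarrow> is_V (CAppR (plug L v) V)"
| "is_V V \<Longrightarrow> is_V (CESL V t)"

inductive is_S :: "ctx \<Rightarrow> bool" where
  "is_S Hole"
| "is_S S \<Longrightarrow> is_L L \<Longrightarrow> is_value v \<Longrightarrow> is_S (CAppL S (plug L v))"
| "is_S S \<Longrightarrow> is_S (CAppR t S)"
| "is_S S \<Longrightarrow> is_S (CESL S t)"

text \<open>Need contexts; the clause N'<x>[x<-N] requires that N' does not capture x,
  i.e. the variable at the hole of N' is the one bound by the outer ES.\<close>
inductive is_N :: "ctx \<Rightarrow> bool" where
  "is_N Hole"
| "is_N N \<Longrightarrow> is_N (CAppL N t)"
| "is_N N \<Longrightarrow> is_N (CESL N t)"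
| "is_N N' \<Longrightarrow> is_N N \<Longrightarrow> is_N (CESR (plug N' (Var (bdepth N'))) N)"

definition dB_redex :: "trm \<Rightarrow> bool" where
  "dB_redex r \<longleftrightarrow> (\<exists>L t u. is_L L \<and> r = App (plug L (Lam t)) u)"

definition dBv_redex :: "trm \<Rightarrow> bool" where
  "dBv_redex r \<longleftrightarrow> (\<exists>L L' t v. is_L L \<and> is_L L' \<and> is_value v
      \<and> r = App (plug L (Lam t)) (plug L' v))"

text \<open>ls / lsv w.r.t. a family of contexts P: C<x>[x<-u] with C not capturing x.\<close>
definition ls_redex :: "(ctx \<Rightarrow> bool) \<Rightarrow> trm \<Rightarrow> bool" where
  "ls_redex P r \<longleftrightarrow> (\<exists>C u. P C \<and> r = ES (plug C (Var (bdepth C))) u)"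

definition lsv_redex :: "(ctx \<Rightarrow> bool) \<Rightarrow> trm \<Rightarrow> bool" where
  "lsv_redex P r \<longleftrightarrow> (\<exists>C L v. P C \<and> is_L L \<and> is_value v
      \<and> r = ES (plug C (Var (bdepth C))) (plug L v))"

datatype calculus = Name | ValueLR | ValueRL | Need

fun evctx :: "calculus \<Rightarrow> ctx \<Rightarrow> bool" where
  "evctx Name = is_H"
| "evctx ValueLR = is_V"
| "evctx ValueRL = is_S"
| "evctx Need = is_N"

fun m_redex :: "calculus \<Rightarrow> trm \<Rightarrow> bool" where
  "m_redex Name = dB_redex"
| "m_redex ValueLR = dBv_redex"
| "m_redex ValueRL = dBv_redex"
| "m_redex Need = dB_redex"

fun e_redex :: "calculus \<Rightarrow> trm \<Rightarrow> bool" where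
  "e_redex Name = ls_redex is_H"
| "e_redex ValueLR = lsv_redex is_V"
| "e_redex ValueRL = lsv_redex is_S"
| "e_redex Need = lsv_redex is_N"

definition redex :: "calculus \<Rightarrow> trm \<Rightarrow> bool" where
  "redex c r \<longleftrightarrow> m_redex c r \<or> e_redex c r"

end

theory Submission
  imports Defs
begin


inductive is_G :: "ctx \<Rightarrow> bool" where
  "is_G Hole"
| "is_G G \<Longrightarrow> is_G (CAppL G t)"
| "is_G G \<Longrightarrow> is_G (CAppR t G)"
| "is_G G \<Longrightarrow> is_G (CESL G t)"
| "is_G G' \<Longrightarrow> is_G G \<Longrightarrow> is_G (CESR (plug G' (Var (bdepth G'))) G)"

lemma H_G: "is_H E \<Longrightarrow> is_G E"
  by (induction rule: is_H.induct) (auto intro: is_G.intros)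
lemma V_G: "is_V E \<Longrightarrow> is_G E"
  by (induction rule: is_V.induct) (auto intro: is_G.intros)
lemma S_G: "is_S E \<Longrightarrow> is_G E"
  by (induction rule: is_S.induct) (auto intro: is_G.intros)
lemma N_G: "is_N E \<Longrightarrow> is_G E"
  by (induction rule: is_N.induct) (auto intro: is_G.intros)

lemma R: "is_L L \<Longrightarrow> is_G G \<Longrightarrow> plug G (Var j) \<noteq> plug L (Lam b)"
proof (induction L arbitrary: G j rule: is_L.induct)
  case 1
  then show ?case by (cases rule: is_G.cases) auto
next
  case (2 L t)
  from 2(3) show ?case using 2(2) by (cases rule: is_G.cases) auto
qed

lemma A: "is_L L \<Longrightarrow> is_G G \<Longrightarrow> plug G s = plug L (Lam b) \<Longrightarrow> \<exists>L'. is_L L' \<and> s = plug L' (Lam b)"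
proof (induction L arbitrary: G rule: is_L.induct)
  case 1
  from 1(1) show ?case using 1(2) by (cases rule: is_G.cases) (auto intro: is_L.intros)
next
  case (2 L t)
  from 2(3) show ?case
  proof (cases rule: is_G.cases)
    case 1
    then show ?thesis using 2 by (metis plug.simps(1) plug.simps(5) is_L.intros(2))
  next
    case (4 G' t')
    then show ?thesis using 2 by auto
  next
    case (5 G' G'')
    then show ?thesis using 2 R[of L G'] by auto
  qed (use 2 in auto)
qed

lemma noApp: "is_L L \<Longrightarrow> plug L (Lam b) \<noteq> App x y"
  by (cases rule: is_L.cases) auto

lemma noES: "is_L L \<Longrightarrow> is_G C \<Longrightarrow> plug L (Lam b) \<noteq> ES (plug C (Var k)) u"
  by (cases rule: is_L.cases) (auto dest: R[of _ C k b] simp: eq_commute)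

lemma evctx_G: "evctx c E \<Longrightarrow> is_G E"
  by (cases c) (auto intro: H_G V_G S_G N_G)

lemma noredex_L: "is_L L \<Longrightarrow> evctx c E \<Longrightarrow> redex c r \<Longrightarrow> plug E r = plug L (Lam b) \<Longrightarrow> False"
proof -
  assume l: "is_L L" and e: "evctx c E" and r: "redex c r" and p: "plug E r = plug L (Lam b)"
  from A[OF l evctx_G[OF e] p] obtain L' where l': "is_L L'" and rr: "r = plug L' (Lam b)" by blast
  show False using r
  proof (cases c)
    case Name then show ?thesis using r rr l' noApp[OF l'] noES[OF l' H_G]
      by (auto simp: redex_def dB_redex_def ls_redex_def)
  next
    case ValueLR then show ?thesis using r rr l' noApp[OF l'] noES[OF l' V_G]
      by (auto simp: redex_def dBv_redex_def lsv_redex_def)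
  next
    case ValueRL then show ?thesis using r rr l' noApp[OF l'] noES[OF l' S_G]
      by (auto simp: redex_def dBv_redex_def lsv_redex_def)
  next
    case Need then show ?thesis using r rr l' noApp[OF l'] noES[OF l' N_G]
      by (auto simp: redex_def dB_redex_def lsv_redex_def)
  qed
qed

lemma valR: "is_L L \<Longrightarrow> is_value v \<Longrightarrow> is_G G \<Longrightarrow> plug G (Var j) \<noteq> plug L v"
  using R unfolding is_value_def by blast

lemma val_noredex: "is_L L \<Longrightarrow> is_value v \<Longrightarrow> evctx c E \<Longrightarrow> redex c r \<Longrightarrow> plug E r = plug L v \<Longrightarrow> False"
  using noredex_L unfolding is_value_def by blast



lemma U_H: "is_H N1 \<Longrightarrow> is_H N2 \<Longrightarrow> plug N1 (Var j1) = plug N2 (Var j2) \<Longrightarrow> N1 = N2 \<and> j1 = j2"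
proof (induction N1 arbitrary: N2 rule: is_H.induct)
  case 1 then show ?case by (cases rule: is_H.cases) auto
next
  case (2 H t) from 2(3) show ?case using 2(4) by (cases rule: is_H.cases) (auto dest: 2(2))
next
  case (3 H t) from 3(3) show ?case using 3(4) by (cases rule: is_H.cases) (auto dest: 3(2))
qed

lemma Q_H: "is_H E \<Longrightarrow> is_H N \<Longrightarrow> redex Name r \<Longrightarrow> plug N (Var j) = plug E r \<Longrightarrow> bdepth N \<le> j \<Longrightarrow> False"
proof (induction E arbitrary: N j rule: is_H.induct)
  case 1
  from 1(2) consider (m) L t u where "is_L L" "r = App (plug L (Lam t)) u"
    | (e) C u where "is_H C" "r = ES (plug C (Var (bdepth C))) u"
    unfolding redex_def dB_redex_def ls_redex_def m_redex.simps e_redex.simps by blast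
  then show ?case
  proof cases
    case m
    from 1(1) show ?thesis
    proof (cases rule: is_H.cases)
      case (2 N' t')
      then have "plug N' (Var j) = plug L (Lam t)" using m 1(3) by simp
      with R[OF m(1) H_G[OF 2(2)]] show ?thesis by simp
    qed (use m 1 in auto)
  next
    case e
    from 1(1) show ?thesis
    proof (cases rule: is_H.cases)
      case (3 N' t')
      then have "plug N' (Var j) = plug C (Var (bdepth C))" using e 1(3) by simp
      from U_H[OF 3(2) e(1) this] 3(1) 1(4) show ?thesis by simp
    qed (use e 1 in auto)
  qed
next
  case (2 H t)
  from 2(3,5) obtain N' where N': "is_H N'" "plug N' (Var j) = plug H r" "N = CAppL N' t"
    by (cases rule: is_H.cases) auto
  have "bdepth N' \<le> j" using 2(6) N'(3) by simp
  then show ?case using 2(2)[OF N'(1) 2(4) N'(2)] by blast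
next
  case (3 H t)
  from 3(3,5) obtain N' where N': "is_H N'" "plug N' (Var j) = plug H r" "N = CESL N' t"
    by (cases rule: is_H.cases) auto
  have "bdepth N' \<le> j" using 3(6) N'(3) by simp
  then show ?case using 3(2)[OF N'(1) 3(4) N'(2)] by blast
qed

lemma Q_H': "is_H H \<Longrightarrow> is_H C \<Longrightarrow> redex Name r \<Longrightarrow> plug H r = plug C (Var (bdepth C)) \<Longrightarrow> False"
  using Q_H[of H C r "bdepth C"] by auto

lemma HH: assumes "is_H E" "redex Name r" "redex Name r'" "r' = plug E r" shows "E = Hole"
  using assms(1)
proof (cases rule: is_H.cases)
  case (2 H t)
  from assms(3) have "dB_redex r' \<or> ls_redex is_H r'" by (simp add: redex_def)
  then show ?thesis
  proof
    assume "dB_redex r'"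
    then obtain L b u where "is_L L" "r' = App (plug L (Lam b)) u" unfolding dB_redex_def by blast
    then show ?thesis using 2 assms(2,4) noredex_L[of L Name H r b] by simp
  next
    assume "ls_redex is_H r'"
    then show ?thesis using 2 assms(4) unfolding ls_redex_def by auto
  qed
next
  case (3 H t)
  from assms(3) have "dB_redex r' \<or> ls_redex is_H r'" by (simp add: redex_def)
  then show ?thesis
  proof
    assume "dB_redex r'"
    then show ?thesis using 3 assms(4) unfolding dB_redex_def by auto
  next
    assume "ls_redex is_H r'"
    then obtain C u where "is_H C" "r' = ES (plug C (Var (bdepth C))) u" unfolding ls_redex_def by blast
    then show ?thesis using 3 assms(2,4) Q_H'[of H C r] by simp
  qed
qed simp

lemma P_H: "is_H E1 \<Longrightarrow> is_H E2 \<Longrightarrow> redex Name r1 \<Longrightarrow> redex Name r2 \<Longrightarrow> plug E1 r1 = plug E2 r2 \<Longrightarrow> E1 = E2 \<and> r1 = r2"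
proof (induction E1 arbitrary: E2 rule: is_H.induct)
  case 1
  have "E2 = Hole" using HH[OF 1(1) 1(3) 1(2)] 1(4) by simp
  then show ?case using 1(4) by simp
next
  case (2 H t)
  from 2(3) show ?case
  proof (cases rule: is_H.cases)
    case 1
    then have "r2 = plug (CAppL H t) r1" using 2(6) by simp
    from HH[OF is_H.intros(2)[OF 2(1)] 2(4) 2(5) this] show ?thesis by simp
  next
    case (2 H' t')
    then show ?thesis using \<open>is_H H\<close> \<open>redex Name r1\<close> \<open>redex Name r2\<close> \<open>plug (CAppL H t) r1 = plug E2 r2\<close>
      \<open>\<And>E2. is_H E2 \<Longrightarrow> redex Name r1 \<Longrightarrow> redex Name r2 \<Longrightarrow> plug H r1 = plug E2 r2 \<Longrightarrow> H = E2 \<and> r1 = r2\<close>[of H'] by simp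
  next
    case (3 H' t')
    then show ?thesis using \<open>plug (CAppL H t) r1 = plug E2 r2\<close> by simp
  qed
next
  case (3 H t)
  from 3(3) show ?case
  proof (cases rule: is_H.cases)
    case 1
    then have "r2 = plug (CESL H t) r1" using 3(6) by simp
    from HH[OF is_H.intros(3)[OF 3(1)] 3(4) 3(5) this] show ?thesis by simp
  next
    case (3 H' t')
    then show ?thesis using \<open>is_H H\<close> \<open>redex Name r1\<close> \<open>redex Name r2\<close> \<open>plug (CESL H t) r1 = plug E2 r2\<close>
      \<open>\<And>E2. is_H E2 \<Longrightarrow> redex Name r1 \<Longrightarrow> redex Name r2 \<Longrightarrow> plug H r1 = plug E2 r2 \<Longrightarrow> H = E2 \<and> r1 = r2\<close>[of H'] by simp
  next
    case (2 H' t')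
    then show ?thesis using \<open>plug (CESL H t) r1 = plug E2 r2\<close> by simp
  qed
qed



lemma U_V: "is_V N1 \<Longrightarrow> is_V N2 \<Longrightarrow> plug N1 (Var j1) = plug N2 (Var j2) \<Longrightarrow> N1 = N2 \<and> j1 = j2"
proof (induction N1 arbitrary: N2 rule: is_V.induct)
  case 1 from 1(1) show ?case using 1(2) by (cases rule: is_V.cases) auto
next
  case (2 V t)
  from 2(3) show ?case
  proof (cases rule: is_V.cases)
    case (2 V' t')
    then show ?thesis using "2.IH"[of V'] \<open>plug (CAppL V t) (Var j1) = plug N2 (Var j2)\<close> by simp
  next
    case (3 L v V')
    then have "plug V (Var j1) = plug L v" using \<open>plug (CAppL V t) (Var j1) = plug N2 (Var j2)\<close> by simp
    with valR[OF 3(2,3) V_G[OF \<open>is_V V\<close>]] show ?thesis by simp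
  qed (use \<open>plug (CAppL V t) (Var j1) = plug N2 (Var j2)\<close> in simp_all)
next
  case (3 L v V)
  from "3.prems"(1) show ?case
  proof (cases rule: is_V.cases)
    case (2 V' t')
    then have "plug V' (Var j2) = plug L v" using "3.prems"(2) by simp
    with valR[OF 3(1,2) V_G[OF 2(2)]] show ?thesis by simp
  next
    case (3 L' v' V')
    then show ?thesis using "3.IH"[of V'] "3.prems"(2) by simp
  qed (use "3.prems"(2) in simp_all)
next
  case (4 V t)
  from "4.prems"(1) show ?case
  proof (cases rule: is_V.cases)
    case (4 V' t')
    then show ?thesis using "4.IH"[of V'] "4.prems"(2) by simp
  qed (use "4.prems"(2) in simp_all)
qed

lemma redex_LR: "redex ValueLR r \<longleftrightarrow> dBv_redex r \<or> lsv_redex is_V r"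
  by (simp add: redex_def)

lemma Q_V: "is_V E \<Longrightarrow> is_V N \<Longrightarrow> redex ValueLR r \<Longrightarrow> plug N (Var j) = plug E r \<Longrightarrow> bdepth N \<le> j \<Longrightarrow> False"
proof (induction E arbitrary: N j rule: is_V.induct)
  case 1
  have eq: "plug N (Var j) = r" using "1.prems"(3) by simp
  from "1.prems"(2) have "dBv_redex r \<or> lsv_redex is_V r" by (simp add: redex_LR)
  then show ?case
  proof
    assume "dBv_redex r"
    then obtain L L' t v where l: "is_L L" "is_L L'" "is_value v" "r = App (plug L (Lam t)) (plug L' v)"
      unfolding dBv_redex_def by blast
    from "1.prems"(1) show False
    proof (cases rule: is_V.cases)
      case (2 N' t')
      then have "plug N' (Var j) = plug L (Lam t)" using eq l(4) by simp
      with R[OF l(1) V_G[OF 2(2)]] show False by simp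
    next
      case (3 L2 v2 N')
      then have "plug N' (Var j) = plug L' v" using eq l(4) by simp
      with valR[OF l(2,3) V_G[OF 3(4)]] show False by simp
    qed (use eq l in simp_all)
  next
    assume "lsv_redex is_V r"
    then obtain C L v where l: "is_V C" "is_L L" "is_value v" "r = ES (plug C (Var (bdepth C))) (plug L v)"
      unfolding lsv_redex_def by blast
    from "1.prems"(1) show False
    proof (cases rule: is_V.cases)
      case (4 N' t')
      then have "plug N' (Var j) = plug C (Var (bdepth C))" using eq l(4) by simp
      from U_V[OF 4(2) l(1) this] 4(1) "1.prems"(4) show False by simp
    qed (use eq l in simp_all)
  qed
next
  case (2 E' t)
  from "2.prems"(1) show ?case
  proof (cases rule: is_V.cases)
    case (2 N' t')
    then have "plug N' (Var j) = plug E' r" "bdepth N' \<le> j" using "2.prems"(3,4) by simp_all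
    from "2.IH"[OF _ "2.prems"(2) this] show False using 2(2) by simp
  next
    case (3 L v N')
    then have "plug E' r = plug L v" using "2.prems"(3) by simp
    from val_noredex[OF 3(2,3) _ "2.prems"(2) this] "2.hyps" show False by simp
  qed (use "2.prems"(3) in simp_all)
next
  case (3 L v E')
  from "3.prems"(1) show ?case
  proof (cases rule: is_V.cases)
    case (2 N' t')
    then have "plug N' (Var j) = plug L v" using "3.prems"(3) by simp
    with valR[OF "3.hyps"(1,2) V_G[OF 2(2)]] show False by simp
  next
    case (3 L2 v2 N')
    then have "plug N' (Var j) = plug E' r" "bdepth N' \<le> j" using "3.prems"(3,4) by simp_all
    from "3.IH"[OF _ "3.prems"(2) this] show False using 3(4) by simp
  qed (use "3.prems"(3) in simp_all)
next
  case (4 E' t)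
  from "4.prems"(1) show ?case
  proof (cases rule: is_V.cases)
    case (4 N' t')
    then have "plug N' (Var j) = plug E' r" "bdepth N' \<le> j" using "4.prems"(3,4) by simp_all
    from "4.IH"[OF _ "4.prems"(2) this] show False using 4(2) by simp
  qed (use "4.prems"(3) in simp_all)
qed

lemma Q_V': "is_V H \<Longrightarrow> is_V C \<Longrightarrow> redex ValueLR r \<Longrightarrow> plug H r = plug C (Var (bdepth C)) \<Longrightarrow> False"
  using Q_V[of H C r "bdepth C"] by auto

lemma HV: assumes "is_V E" "redex ValueLR r" "redex ValueLR r'" "r' = plug E r" shows "E = Hole"
  using assms(1)
proof (cases rule: is_V.cases)
  case (2 H t)
  from assms(3) have "dBv_redex r' \<or> lsv_redex is_V r'" by (simp add: redex_LR)
  then show ?thesis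
  proof
    assume "dBv_redex r'"
    then obtain L L' b v where l: "is_L L" "r' = App (plug L (Lam b)) (plug L' v)" unfolding dBv_redex_def by blast
    then have "plug H r = plug L (Lam b)" using 2 assms(4) by simp
    from noredex_L[OF l(1) _ assms(2) this] 2 show ?thesis by simp
  next
    assume "lsv_redex is_V r'"
    then show ?thesis using 2 assms(4) unfolding lsv_redex_def by auto
  qed
next
  case (3 L v H)
  from assms(3) have "dBv_redex r' \<or> lsv_redex is_V r'" by (simp add: redex_LR)
  then show ?thesis
  proof
    assume "dBv_redex r'"
    then obtain L1 L' b v' where l: "is_L L'" "is_value v'" "r' = App (plug L1 (Lam b)) (plug L' v')" unfolding dBv_redex_def by blast
    then have "plug H r = plug L' v'" using 3 assms(4) by simp
    from val_noredex[OF l(1,2) _ assms(2) this] 3 show ?thesis by simp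
  next
    assume "lsv_redex is_V r'"
    then show ?thesis using 3 assms(4) unfolding lsv_redex_def by auto
  qed
next
  case (4 H t)
  from assms(3) have "dBv_redex r' \<or> lsv_redex is_V r'" by (simp add: redex_LR)
  then show ?thesis
  proof
    assume "dBv_redex r'"
    then show ?thesis using 4 assms(4) unfolding dBv_redex_def by auto
  next
    assume "lsv_redex is_V r'"
    then obtain C L v where "is_V C" "r' = ES (plug C (Var (bdepth C))) (plug L v)" unfolding lsv_redex_def by blast
    then show ?thesis using 4 assms(2,4) Q_V'[of H C r] by simp
  qed
qed simp

lemma P_V: "is_V E1 \<Longrightarrow> is_V E2 \<Longrightarrow> redex ValueLR r1 \<Longrightarrow> redex ValueLR r2 \<Longrightarrow> plug E1 r1 = plug E2 r2 \<Longrightarrow> E1 = E2 \<and> r1 = r2"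
proof (induction E1 arbitrary: E2 rule: is_V.induct)
  case 1
  have "E2 = Hole" using HV[OF "1.prems"(1,3,2)] "1.prems"(4) by simp
  then show ?case using "1.prems"(4) by simp
next
  case (2 H t)
  from "2.prems"(1) show ?case
  proof (cases rule: is_V.cases)
    case 1
    then have "r2 = plug (CAppL H t) r1" using "2.prems"(4) by simp
    from HV[OF is_V.intros(2)[OF "2.hyps"] "2.prems"(2,3) this] show ?thesis by simp
  next
    case (2 H' t')
    then show ?thesis using "2.IH"[OF _ "2.prems"(2,3), of H'] "2.prems"(4) by simp
  next
    case (3 L v H')
    then have "plug H r1 = plug L v" using "2.prems"(4) by simp
    from val_noredex[OF 3(2,3) _ "2.prems"(2) this] "2.hyps" show ?thesis by simp
  qed (use "2.prems"(4) in simp_all)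
next
  case (3 L v H)
  from "3.prems"(1) show ?case
  proof (cases rule: is_V.cases)
    case 1
    then have "r2 = plug (CAppR (plug L v) H) r1" using "3.prems"(4) by simp
    from HV[OF is_V.intros(3)[OF "3.hyps"(1,2,3)] "3.prems"(2,3) this] show ?thesis by simp
  next
    case (2 H' t')
    then have "plug H' r2 = plug L v" using "3.prems"(4) by simp
    from val_noredex[OF "3.hyps"(1,2) _ "3.prems"(3) this] 2(2) show ?thesis by simp
  next
    case (3 L' v' H')
    then show ?thesis using "3.IH"[OF _ "3.prems"(2,3), of H'] "3.prems"(4) by simp
  qed (use "3.prems"(4) in simp_all)
next
  case (4 H t)
  from "4.prems"(1) show ?case
  proof (cases rule: is_V.cases)
    case 1
    then have "r2 = plug (CESL H t) r1" using "4.prems"(4) by simp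
    from HV[OF is_V.intros(4)[OF "4.hyps"] "4.prems"(2,3) this] show ?thesis by simp
  next
    case (4 H' t')
    then show ?thesis using "4.IH"[OF _ "4.prems"(2,3), of H'] "4.prems"(4) by simp
  qed (use "4.prems"(4) in simp_all)
qed



lemma U_S: "is_S N1 \<Longrightarrow> is_S N2 \<Longrightarrow> plug N1 (Var j1) = plug N2 (Var j2) \<Longrightarrow> N1 = N2 \<and> j1 = j2"
proof (induction N1 arbitrary: N2 rule: is_S.induct)
  case 1 from "1.prems"(1) show ?case using "1.prems"(2) by (cases rule: is_S.cases) auto
next
  case (2 S L v)
  from "2.prems"(1) show ?case
  proof (cases rule: is_S.cases)
    case (2 S' L' v')
    then show ?thesis using "2.IH"[of S'] "2.prems"(2) by simp
  next
    case (3 S' t')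
    then have "plug S' (Var j2) = plug L v" using "2.prems"(2) by simp
    with valR[OF "2.hyps"(2,3) S_G[OF 3(2)]] show ?thesis by simp
  qed (use "2.prems"(2) in simp_all)
next
  case (3 S t)
  from "3.prems"(1) show ?case
  proof (cases rule: is_S.cases)
    case (2 S' L' v')
    then have "plug S (Var j1) = plug L' v'" using "3.prems"(2) by simp
    with valR[OF 2(3,4) S_G[OF "3.hyps"]] show ?thesis by simp
  next
    case (3 S' t')
    then show ?thesis using "3.IH"[of S'] "3.prems"(2) by simp
  qed (use "3.prems"(2) in simp_all)
next
  case (4 S t)
  from "4.prems"(1) show ?case
  proof (cases rule: is_S.cases)
    case (4 S' t')
    then show ?thesis using "4.IH"[of S'] "4.prems"(2) by simp
  qed (use "4.prems"(2) in simp_all)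
qed

lemma redex_RL: "redex ValueRL r \<longleftrightarrow> dBv_redex r \<or> lsv_redex is_S r"
  by (simp add: redex_def)

lemma Q_S: "is_S E \<Longrightarrow> is_S N \<Longrightarrow> redex ValueRL r \<Longrightarrow> plug N (Var j) = plug E r \<Longrightarrow> bdepth N \<le> j \<Longrightarrow> False"
proof (induction E arbitrary: N j rule: is_S.induct)
  case 1
  have eq: "plug N (Var j) = r" using "1.prems"(3) by simp
  from "1.prems"(2) have "dBv_redex r \<or> lsv_redex is_S r" by (simp add: redex_RL)
  then show ?case
  proof
    assume "dBv_redex r"
    then obtain L L' t v where l: "is_L L" "is_L L'" "is_value v" "r = App (plug L (Lam t)) (plug L' v)"
      unfolding dBv_redex_def by blast
    from "1.prems"(1) show False
    proof (cases rule: is_S.cases)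
      case (2 N' L2 v2)
      then have "plug N' (Var j) = plug L (Lam t)" using eq l(4) by simp
      with R[OF l(1) S_G[OF 2(2)]] show False by simp
    next
      case (3 N' t')
      then have "plug N' (Var j) = plug L' v" using eq l(4) by simp
      with valR[OF l(2,3) S_G[OF 3(2)]] show False by simp
    qed (use eq l in simp_all)
  next
    assume "lsv_redex is_S r"
    then obtain C L v where l: "is_S C" "is_L L" "is_value v" "r = ES (plug C (Var (bdepth C))) (plug L v)"
      unfolding lsv_redex_def by blast
    from "1.prems"(1) show False
    proof (cases rule: is_S.cases)
      case (4 N' t')
      then have "plug N' (Var j) = plug C (Var (bdepth C))" using eq l(4) by simp
      from U_S[OF 4(2) l(1) this] 4(1) "1.prems"(4) show False by simp
    qed (use eq l in simp_all)
  qed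
next
  case (2 E' L v)
  from "2.prems"(1) show ?case
  proof (cases rule: is_S.cases)
    case (2 N' L' v')
    then have "plug N' (Var j) = plug E' r" "bdepth N' \<le> j" using "2.prems"(3,4) by simp_all
    from "2.IH"[OF _ "2.prems"(2) this] show False using 2(2) by simp
  next
    case (3 N' t')
    then have "plug N' (Var j) = plug L v" using "2.prems"(3) by simp
    with valR[OF "2.hyps"(2,3) S_G[OF 3(2)]] show False by simp
  qed (use "2.prems"(3) in simp_all)
next
  case (3 E' t)
  from "3.prems"(1) show ?case
  proof (cases rule: is_S.cases)
    case (2 N' L v)
    then have "plug E' r = plug L v" using "3.prems"(3) by simp
    from val_noredex[OF 2(3,4) _ "3.prems"(2) this] "3.hyps" show False by simp
  next
    case (3 N' t')
    then have "plug N' (Var j) = plug E' r" "bdepth N' \<le> j" using "3.prems"(3,4) by simp_all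
    from "3.IH"[OF _ "3.prems"(2) this] show False using 3(2) by simp
  qed (use "3.prems"(3) in simp_all)
next
  case (4 E' t)
  from "4.prems"(1) show ?case
  proof (cases rule: is_S.cases)
    case (4 N' t')
    then have "plug N' (Var j) = plug E' r" "bdepth N' \<le> j" using "4.prems"(3,4) by simp_all
    from "4.IH"[OF _ "4.prems"(2) this] show False using 4(2) by simp
  qed (use "4.prems"(3) in simp_all)
qed

lemma Q_S': "is_S H \<Longrightarrow> is_S C \<Longrightarrow> redex ValueRL r \<Longrightarrow> plug H r = plug C (Var (bdepth C)) \<Longrightarrow> False"
  using Q_S[of H C r "bdepth C"] by auto

lemma HS: assumes "is_S E" "redex ValueRL r" "redex ValueRL r'" "r' = plug E r" shows "E = Hole"
  using assms(1)
proof (cases rule: is_S.cases)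
  case (2 H L v)
  from assms(3) have "dBv_redex r' \<or> lsv_redex is_S r'" by (simp add: redex_RL)
  then show ?thesis
  proof
    assume "dBv_redex r'"
    then obtain L1 L' b v' where l: "is_L L1" "r' = App (plug L1 (Lam b)) (plug L' v')" unfolding dBv_redex_def by blast
    then have "plug H r = plug L1 (Lam b)" using 2 assms(4) by simp
    from noredex_L[OF l(1) _ assms(2) this] 2 show ?thesis by simp
  next
    assume "lsv_redex is_S r'"
    then show ?thesis using 2 assms(4) unfolding lsv_redex_def by auto
  qed
next
  case (3 H t)
  from assms(3) have "dBv_redex r' \<or> lsv_redex is_S r'" by (simp add: redex_RL)
  then show ?thesis
  proof
    assume "dBv_redex r'"
    then obtain L1 L' b v' where l: "is_L L'" "is_value v'" "r' = App (plug L1 (Lam b)) (plug L' v')" unfolding dBv_redex_def by blast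
    then have "plug H r = plug L' v'" using 3 assms(4) by simp
    from val_noredex[OF l(1,2) _ assms(2) this] 3 show ?thesis by simp
  next
    assume "lsv_redex is_S r'"
    then show ?thesis using 3 assms(4) unfolding lsv_redex_def by auto
  qed
next
  case (4 H t)
  from assms(3) have "dBv_redex r' \<or> lsv_redex is_S r'" by (simp add: redex_RL)
  then show ?thesis
  proof
    assume "dBv_redex r'"
    then show ?thesis using 4 assms(4) unfolding dBv_redex_def by auto
  next
    assume "lsv_redex is_S r'"
    then obtain C L v where "is_S C" "r' = ES (plug C (Var (bdepth C))) (plug L v)" unfolding lsv_redex_def by blast
    then show ?thesis using 4 assms(2,4) Q_S'[of H C r] by simp
  qed
qed simp

lemma P_S: "is_S E1 \<Longrightarrow> is_S E2 \<Longrightarrow> redex ValueRL r1 \<Longrightarrow> redex ValueRL r2 \<Longrightarrow> plug E1 r1 = plug E2 r2 \<Longrightarrow> E1 = E2 \<and> r1 = r2"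
proof (induction E1 arbitrary: E2 rule: is_S.induct)
  case 1
  have "E2 = Hole" using HS[OF "1.prems"(1,3,2)] "1.prems"(4) by simp
  then show ?case using "1.prems"(4) by simp
next
  case (2 H L v)
  from "2.prems"(1) show ?case
  proof (cases rule: is_S.cases)
    case 1
    then have "r2 = plug (CAppL H (plug L v)) r1" using "2.prems"(4) by simp
    from HS[OF is_S.intros(2)[OF "2.hyps"] "2.prems"(2,3) this] show ?thesis by simp
  next
    case (2 H' L' v')
    then show ?thesis using "2.IH"[OF _ "2.prems"(2,3), of H'] "2.prems"(4) by simp
  next
    case (3 H' t')
    then have "plug H' r2 = plug L v" using "2.prems"(4) by simp
    from val_noredex[OF "2.hyps"(2,3) _ "2.prems"(3) this] 3(2) show ?thesis by simp
  qed (use "2.prems"(4) in simp_all)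
next
  case (3 H t)
  from "3.prems"(1) show ?case
  proof (cases rule: is_S.cases)
    case 1
    then have "r2 = plug (CAppR t H) r1" using "3.prems"(4) by simp
    from HS[OF is_S.intros(3)[OF "3.hyps"] "3.prems"(2,3) this] show ?thesis by simp
  next
    case (2 H' L' v')
    then have "plug H r1 = plug L' v'" using "3.prems"(4) by simp
    from val_noredex[OF 2(3,4) _ "3.prems"(2) this] "3.hyps" show ?thesis by simp
  next
    case (3 H' t')
    then show ?thesis using "3.IH"[OF _ "3.prems"(2,3), of H'] "3.prems"(4) by simp
  qed (use "3.prems"(4) in simp_all)
next
  case (4 H t)
  from "4.prems"(1) show ?case
  proof (cases rule: is_S.cases)
    case 1
    then have "r2 = plug (CESL H t) r1" using "4.prems"(4) by simp
    from HS[OF is_S.intros(4)[OF "4.hyps"] "4.prems"(2,3) this] show ?thesis by simp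
  next
    case (4 H' t')
    then show ?thesis using "4.IH"[OF _ "4.prems"(2,3), of H'] "4.prems"(4) by simp
  qed (use "4.prems"(4) in simp_all)
qed



lemma U_N: "is_N N1 \<Longrightarrow> is_N N2 \<Longrightarrow> plug N1 (Var j1) = plug N2 (Var j2) \<Longrightarrow> bdepth N1 \<le> j1 \<Longrightarrow> bdepth N2 \<le> j2 \<Longrightarrow> N1 = N2 \<and> j1 = j2"
proof (induction N1 arbitrary: N2 j1 j2 rule: is_N.induct)
  case 1 from "1.prems"(1) show ?case using "1.prems"(2) by (cases rule: is_N.cases) auto
next
  case (2 N t)
  from "2.prems"(1) show ?case
  proof (cases rule: is_N.cases)
    case (2 N' t')
    then show ?thesis using "2.IH"[of N' j1 j2] "2.prems"(2,3,4) by simp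
  qed (use "2.prems"(2) in simp_all)
next
  case (3 N t)
  from "3.prems"(1) show ?case
  proof (cases rule: is_N.cases)
    case (3 N' t')
    then show ?thesis using "3.IH"[of N' j1 j2] "3.prems"(2,3,4) by simp
  next
    case (4 N'' N3)
    then have "plug N (Var j1) = plug N'' (Var (bdepth N''))" using "3.prems"(2) by simp
    from "3.IH"[OF 4(2) this] "3.prems"(3) show ?thesis by simp
  qed (use "3.prems"(2) in simp_all)
next
  case (4 N' N)
  from "4.prems"(1) show ?case
  proof (cases rule: is_N.cases)
    case (3 N3 t')
    then have "plug N' (Var (bdepth N')) = plug N3 (Var j2)" using "4.prems"(2) by simp
    from "4.IH"(1)[OF 3(2) this] 3(1) "4.prems"(4) show ?thesis by auto
  next
    case (4 N'' N3)
    then show ?thesis using "4.IH"(2)[of N3 j1 j2] "4.prems"(2,3,4) by simp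
  qed (use "4.prems"(2) in simp_all)
qed

lemma redex_Need: "redex Need r \<longleftrightarrow> dB_redex r \<or> lsv_redex is_N r"
  by (simp add: redex_def)

lemma Q_N: "is_N E \<Longrightarrow> is_N N \<Longrightarrow> redex Need r \<Longrightarrow> plug N (Var j) = plug E r \<Longrightarrow> bdepth N \<le> j \<Longrightarrow> False"
proof (induction E arbitrary: N j rule: is_N.induct)
  case 1
  have eq: "plug N (Var j) = r" using "1.prems"(3) by simp
  from "1.prems"(2) have "dB_redex r \<or> lsv_redex is_N r" by (simp add: redex_Need)
  then show ?case
  proof
    assume "dB_redex r"
    then obtain L t u where l: "is_L L" "r = App (plug L (Lam t)) u"
      unfolding dB_redex_def by blast
    from "1.prems"(1) show False
    proof (cases rule: is_N.cases)
      case (2 N' t')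
      then have "plug N' (Var j) = plug L (Lam t)" using eq l(2) by simp
      with R[OF l(1) N_G[OF 2(2)]] show False by simp
    qed (use eq l in simp_all)
  next
    assume "lsv_redex is_N r"
    then obtain C L v where l: "is_N C" "is_L L" "is_value v" "r = ES (plug C (Var (bdepth C))) (plug L v)"
      unfolding lsv_redex_def by blast
    from "1.prems"(1) show False
    proof (cases rule: is_N.cases)
      case (3 N' t')
      then have "plug N' (Var j) = plug C (Var (bdepth C))" "bdepth N' \<le> j" using eq l(4) "1.prems"(4) by simp_all
      from U_N[OF 3(2) l(1) this order_refl] 3(1) "1.prems"(4) show False by simp
    next
      case (4 N'' N')
      then have "plug N' (Var j) = plug L v" using eq l(4) by simp
      with valR[OF l(2,3) N_G[OF 4(3)]] show False by simp
    qed (use eq l in simp_all)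
  qed
next
  case (2 E' t)
  from "2.prems"(1) show ?case
  proof (cases rule: is_N.cases)
    case (2 N' t')
    then have "plug N' (Var j) = plug E' r" "bdepth N' \<le> j" using "2.prems"(3,4) by simp_all
    from "2.IH"[OF _ "2.prems"(2) this] show False using 2(2) by simp
  qed (use "2.prems"(3) in simp_all)
next
  case (3 E' t)
  from "3.prems"(1) show ?case
  proof (cases rule: is_N.cases)
    case (3 N' t')
    then have "plug N' (Var j) = plug E' r" "bdepth N' \<le> j" using "3.prems"(3,4) by simp_all
    from "3.IH"[OF _ "3.prems"(2) this] show False using 3(2) by simp
  next
    case (4 N'' N')
    then have "plug N'' (Var (bdepth N'')) = plug E' r" using "3.prems"(3) by simp
    from "3.IH"[OF 4(2) "3.prems"(2) this order_refl] show False .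
  qed (use "3.prems"(3) in simp_all)
next
  case (4 E0 E')
  from "4.prems"(1) show ?case
  proof (cases rule: is_N.cases)
    case (3 N' t')
    then have "plug N' (Var j) = plug E0 (Var (bdepth E0))" "bdepth N' \<le> j" using "4.prems"(3,4) by simp_all
    from U_N[OF 3(2) "4.hyps"(1) this order_refl] 3(1) "4.prems"(4) show False by simp
  next
    case (4 N'' N')
    then have "plug N' (Var j) = plug E' r" "bdepth N' \<le> j" using "4.prems"(3,4) by simp_all
    from "4.IH"(2)[OF _ "4.prems"(2) this] show False using 4(3) by simp
  qed (use "4.prems"(3) in simp_all)
qed

lemma Q_N': "is_N H \<Longrightarrow> is_N C \<Longrightarrow> redex Need r \<Longrightarrow> plug H r = plug C (Var (bdepth C)) \<Longrightarrow> False"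
  using Q_N[of H C r "bdepth C"] by auto

lemma HN: assumes "is_N E" "redex Need r" "redex Need r'" "r' = plug E r" shows "E = Hole"
  using assms(1)
proof (cases rule: is_N.cases)
  case (2 H t)
  from assms(3) have "dB_redex r' \<or> lsv_redex is_N r'" by (simp add: redex_Need)
  then show ?thesis
  proof
    assume "dB_redex r'"
    then obtain L b u where l: "is_L L" "r' = App (plug L (Lam b)) u" unfolding dB_redex_def by blast
    then have "plug H r = plug L (Lam b)" using 2 assms(4) by simp
    from noredex_L[OF l(1) _ assms(2) this] 2 show ?thesis by simp
  next
    assume "lsv_redex is_N r'"
    then show ?thesis using 2 assms(4) unfolding lsv_redex_def by auto
  qed
next
  case (3 H t)
  from assms(3) have "dB_redex r' \<or> lsv_redex is_N r'" by (simp add: redex_Need)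
  then show ?thesis
  proof
    assume "dB_redex r'"
    then show ?thesis using 3 assms(4) unfolding dB_redex_def by auto
  next
    assume "lsv_redex is_N r'"
    then obtain C L v where "is_N C" "r' = ES (plug C (Var (bdepth C))) (plug L v)" unfolding lsv_redex_def by blast
    then show ?thesis using 3 assms(2,4) Q_N'[of H C r] by simp
  qed
next
  case (4 H0 H)
  from assms(3) have "dB_redex r' \<or> lsv_redex is_N r'" by (simp add: redex_Need)
  then show ?thesis
  proof
    assume "dB_redex r'"
    then show ?thesis using 4 assms(4) unfolding dB_redex_def by auto
  next
    assume "lsv_redex is_N r'"
    then obtain C L v where l: "is_L L" "is_value v" "r' = ES (plug C (Var (bdepth C))) (plug L v)" unfolding lsv_redex_def by blast
    then have "plug H r = plug L v" using 4 assms(4) by simp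
    from val_noredex[OF l(1,2) _ assms(2) this] 4 show ?thesis by simp
  qed
qed simp

lemma P_N: "is_N E1 \<Longrightarrow> is_N E2 \<Longrightarrow> redex Need r1 \<Longrightarrow> redex Need r2 \<Longrightarrow> plug E1 r1 = plug E2 r2 \<Longrightarrow> E1 = E2 \<and> r1 = r2"
proof (induction E1 arbitrary: E2 rule: is_N.induct)
  case 1
  have "E2 = Hole" using HN[OF "1.prems"(1,3,2)] "1.prems"(4) by simp
  then show ?case using "1.prems"(4) by simp
next
  case (2 H t)
  from "2.prems"(1) show ?case
  proof (cases rule: is_N.cases)
    case 1
    then have "r2 = plug (CAppL H t) r1" using "2.prems"(4) by simp
    from HN[OF is_N.intros(2)[OF "2.hyps"] "2.prems"(2,3) this] show ?thesis by simp
  next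
    case (2 H' t')
    then show ?thesis using "2.IH"[OF _ "2.prems"(2,3), of H'] "2.prems"(4) by simp
  qed (use "2.prems"(4) in simp_all)
next
  case (3 H t)
  from "3.prems"(1) show ?case
  proof (cases rule: is_N.cases)
    case 1
    then have "r2 = plug (CESL H t) r1" using "3.prems"(4) by simp
    from HN[OF is_N.intros(3)[OF "3.hyps"] "3.prems"(2,3) this] show ?thesis by simp
  next
    case (3 H' t')
    then show ?thesis using "3.IH"[OF _ "3.prems"(2,3), of H'] "3.prems"(4) by simp
  next
    case (4 H0 H')
    then have "plug H r1 = plug H0 (Var (bdepth H0))" using "3.prems"(4) by simp
    from Q_N'[OF "3.hyps" 4(2) "3.prems"(2) this] show ?thesis ..
  qed (use "3.prems"(4) in simp_all)
next
  case (4 H0 H)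
  from "4.prems"(1) show ?case
  proof (cases rule: is_N.cases)
    case 1
    then have "r2 = plug (CESR (plug H0 (Var (bdepth H0))) H) r1" using "4.prems"(4) by simp
    from HN[OF is_N.intros(4)[OF "4.hyps"] "4.prems"(2,3) this] show ?thesis by simp
  next
    case (3 H' t')
    then have "plug H' r2 = plug H0 (Var (bdepth H0))" using "4.prems"(4) by simp
    from Q_N'[OF 3(2) "4.hyps"(1) "4.prems"(3) this] show ?thesis ..
  next
    case (4 H0' H')
    then show ?thesis using "4.IH"(2)[OF _ "4.prems"(2,3), of H'] "4.prems"(4) by simp
  qed (use "4.prems"(4) in simp_all)
qed


theorem mainTheorem1:
  fixes c :: calculus and E1 E2 :: ctx and r1 r2 :: trm
  assumes "evctx c E1" and "evctx c E2"
    and "redex c r1" and "redex c r2"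
    and "plug E1 r1 = plug E2 r2"
  shows "E1 = E2 \<and> r1 = r2"
proof (cases c)
  case Name then show ?thesis using P_H assms by simp
next
  case ValueLR then show ?thesis using P_V assms by simp
next
  case ValueRL then show ?thesis using P_S assms by simp
next
  case Need then show ?thesis using P_N assms by simp
qed

end
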